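(* Let $A(x)=\sin^2(2\pi x)$, $\hat m(A)=\frac{A(1/3)+A(2/3)}{2}$, $\eta(x)=\frac{x}{4}+\frac12$, $F(x)=A(\frac{x}{2})+A(\frac{x}{4}+\frac12)$, and $V_2(x)=\lim_{n\to\infty}\sum_{i=0}^{n-1}[F(\eta^i(x))-2\hat m(A)]$ for $x\in[0,1]$. Then for each $N$, $V_2(x)=\sum_{i=0}^{N}\bigl(F(\eta^i(x))-2\hat m(A)\bigr)+\epsilon_N(x)$ where $$|\epsilon_N(x)|\le 2\pi\sum_{i=N}^{\infty}\frac{1}{4^i}=\frac{2\pi}{3\cdot4^{N-1}}\le\frac{2}{3\cdot 4^{N-2}}.$$
   Context: $\eta^i$ denotes the $i$-th iterate of $\eta$, with $\eta^0$ the identity. *)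

theory Defs
  imports Complex_Main
begin

definition A :: "real \<Rightarrow> real" where
  "A x = (sin (2 * pi * x))\<^sup>2"

definition m_hat :: real where
  "m_hat = (A (1/3) + A (2/3)) / 2"

definition eta :: "real \<Rightarrow> real" where
  "eta x = x / 4 + 1 / 2"

definition F :: "real \<Rightarrow> real" where
  "F x = A (x / 2) + A (x / 4 + 1 / 2)"

definition V2 :: "real \<Rightarrow> real" where
  "V2 x = lim (\<lambda>n. \<Sum>i<n. F ((eta ^^ i) x) - 2 * m_hat)"

end

theory Submission
  imports Defs
begin

lemma sin_sq_diff: fixes a b :: real shows "(sin a)\<^sup>2 - (sin b)\<^sup>2 = sin (a + b) * sin (a - b)"
proof -
  have "sin (a + b) * sin (a - b) = (sin a * cos b)\<^sup>2 - (cos a * sin b)\<^sup>2"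
    unfolding sin_add sin_diff power2_eq_square by (simp add: algebra_simps)
  also have "\<dots> = (sin a)\<^sup>2 * (1 - (sin b)\<^sup>2) - (1 - (sin a)\<^sup>2) * (sin b)\<^sup>2"
    by (simp add: power_mult_distrib cos_squared_eq)
  finally show ?thesis by (simp add: algebra_simps)
qed

lemma A_lip: "\<bar>A u - A v\<bar> \<le> 2 * pi * \<bar>u - v\<bar>"
proof -
  have "\<bar>A u - A v\<bar> = \<bar>sin (2*pi*u + 2*pi*v)\<bar> * \<bar>sin (2*pi*u - 2*pi*v)\<bar>"
    unfolding A_def sin_sq_diff by (simp add: abs_mult)
  also have "\<dots> \<le> 1 * \<bar>2*pi*u - 2*pi*v\<bar>"
    by (intro mult_mono abs_sin_x_le_abs_x) auto
  also have "\<bar>2*pi*u - 2*pi*v\<bar> = 2 * pi * \<bar>u - v\<bar>"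
    by (simp add: right_diff_distrib[symmetric] abs_mult)
  finally show ?thesis by simp
qed

lemma F_lip: "\<bar>F u - F v\<bar> \<le> 3 * pi / 2 * \<bar>u - v\<bar>"
proof -
  have 1: "\<bar>A (u/2) - A (v/2)\<bar> \<le> 2 * pi * \<bar>u/2 - v/2\<bar>" by (rule A_lip)
  have 2: "\<bar>A (u/4+1/2) - A (v/4+1/2)\<bar> \<le> 2 * pi * \<bar>(u/4+1/2) - (v/4+1/2)\<bar>" by (rule A_lip)
  have e1: "\<bar>u/2 - v/2\<bar> = \<bar>u - v\<bar>/2" and e2: "\<bar>(u/4+1/2) - (v/4+1/2)\<bar> = \<bar>u - v\<bar>/4"
    by (simp_all add: abs_if field_simps)
  show ?thesis using 1 2 unfolding F_def e1 e2 by linarith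
qed

lemma eta_iter: "(eta ^^ i) x = 2/3 + (x - 2/3) / 4 ^ i"
  by (induction i) (auto simp: eta_def field_simps)

lemma F_fix: "F (2/3) = 2 * m_hat"
  unfolding F_def m_hat_def by simp

theorem mainTheorem7:
  fixes N :: nat and x :: real
  assumes "x \<in> {0..1}"
  shows "convergent (\<lambda>n. \<Sum>i<n. F ((eta ^^ i) x) - 2 * m_hat)
    \<and> \<bar>V2 x - (\<Sum>i\<le>N. F ((eta ^^ i) x) - 2 * m_hat)\<bar>
        \<le> 2 * pi * (\<Sum>i. 1 / 4 ^ (i + N))
    \<and> 2 * pi * (\<Sum>i. 1 / (4::real) ^ (i + N)) = 2 * pi / (3 * 4 powr (real N - 1))
    \<and> 2 * pi / (3 * 4 powr (real N - 1)) \<le> 2 / (3 * 4 powr (real N - 2))"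
proof -
  define t where "t i = F ((eta ^^ i) x) - 2 * m_hat" for i
  have xb: "\<bar>x - 2/3\<bar> \<le> 2/3" using assms by (intro abs_leI) auto
  have tb: "\<bar>t i\<bar> \<le> pi / 4 ^ i" for i
  proof -
    have "\<bar>t i\<bar> = \<bar>F ((eta ^^ i) x) - F (2/3)\<bar>" by (simp add: t_def F_fix)
    also have "\<dots> \<le> 3 * pi / 2 * \<bar>(eta ^^ i) x - 2/3\<bar>" by (rule F_lip)
    also have "\<bar>(eta ^^ i) x - 2/3\<bar> = \<bar>x - 2/3\<bar> / 4 ^ i" by (simp add: eta_iter)
    also have "3 * pi / 2 * (\<bar>x - 2/3\<bar> / 4 ^ i) \<le> 3 * pi / 2 * ((2/3) / 4 ^ i)"
      by (intro mult_left_mono divide_right_mono xb) (auto simp: pi_gt_zero less_imp_le)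
    finally show ?thesis by simp
  qed
  have geo: "(\<lambda>i. (1/4::real) ^ i) sums (4/3)"
    using geometric_sums[of "1/4::real"] by simp
  have sg: "summable (\<lambda>i. pi / 4 ^ i)"
    using summable_mult[OF sums_summable[OF geo], of pi] by (simp add: power_divide)
  have st: "summable t"
    by (rule summable_comparison_test[OF _ sg]) (use tb in auto)
  have conv: "convergent (\<lambda>n. \<Sum>i<n. t i)"
    using st summable_iff_convergent by blast
  have V: "V2 x = suminf t"
    unfolding V2_def t_def[symmetric] using st summable_LIMSEQ limI by blast
  have split: "suminf t = (\<Sum>i. t (i + Suc N)) + (\<Sum>i\<le>N. t i)"
    using suminf_split_initial_segment[OF st, of "Suc N"] lessThan_Suc_atMost by simp
  have sS: "(\<lambda>i. 1 / (4::real) ^ (i + N)) sums (4 / 3 / 4 ^ N)"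
  proof -
    have "(\<lambda>i. (1/4::real) ^ i / 4 ^ N) sums (4/3 / 4 ^ N)"
      by (rule sums_divide[OF geo])
    then show ?thesis by (simp add: power_add power_divide)
  qed
  have S: "(\<Sum>i. 1 / (4::real) ^ (i + N)) = 4 / 3 / 4 ^ N" using sS sums_unique by metis
  have sg2: "summable (\<lambda>i. 2 * pi * (1 / (4::real) ^ (i + N)))"
    using summable_mult[OF sums_summable[OF sS], of "2*pi"] .
  have stt: "summable (\<lambda>i. t (i + Suc N))"
    using summable_ignore_initial_segment[OF st] .
  have pw: "\<bar>t (i + Suc N)\<bar> \<le> 2 * pi * (1 / 4 ^ (i + N))" for i
  proof -
    have "\<bar>t (i + Suc N)\<bar> \<le> pi / 4 ^ (i + Suc N)" by (rule tb)
    also have "\<dots> \<le> 2 * pi * (1 / 4 ^ (i + N))"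
      using pi_gt_zero by (simp add: field_simps)
    finally show ?thesis .
  qed
  have up: "(\<Sum>i. t (i + Suc N)) \<le> (\<Sum>i. 2 * pi * (1 / (4::real) ^ (i + N)))"
    by (rule suminf_le[OF _ stt sg2]) (use pw abs_le_iff in blast)
  have lo: "(\<Sum>i. - (2 * pi * (1 / (4::real) ^ (i + N)))) \<le> (\<Sum>i. t (i + Suc N))"
    by (rule suminf_le[OF _ summable_minus[OF sg2] stt]) (use pw abs_le_iff in \<open>simp; smt\<close>)
  have tot: "(\<Sum>i. 2 * pi * (1 / (4::real) ^ (i + N))) = 2 * pi * (\<Sum>i. 1 / 4 ^ (i + N))"
    using suminf_mult[OF sums_summable[OF sS], of "2*pi"] .
  have R: "V2 x - (\<Sum>i\<le>N. t i) = (\<Sum>i. t (i + Suc N))" by (simp add: V split)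
  have b1: "\<bar>V2 x - (\<Sum>i\<le>N. t i)\<bar> \<le> 2 * pi * (\<Sum>i. 1 / 4 ^ (i + N))"
    using up lo tot suminf_minus[OF sg2] unfolding R by linarith
  have p1: "(4::real) powr (real N - 1) = 4 ^ N / 4"
    by (simp add: powr_diff powr_realpow)
  have p2: "(4::real) powr (real N - 2) = 4 ^ N / 16"
    by (simp add: powr_diff powr_realpow)
  have e: "2 * pi * (\<Sum>i. 1 / (4::real) ^ (i + N)) = 2 * pi / (3 * 4 powr (real N - 1))"
    unfolding S p1 by (simp add: field_simps)
  have l: "2 * pi / (3 * 4 powr (real N - 1)) \<le> 2 / (3 * 4 powr (real N - 2))"
    unfolding p1 p2 using pi_less_4 by (simp add: field_simps)
  show ?thesis using conv b1 e l unfolding t_def by simp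
qed

end
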